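(* Let $\mathcal H$ be a real Hilbert space and $1\le p<2$. Let $J:\mathcal H\to\mathbb R\cup\{\infty\}$ be convex, lower semicontinuous, proper, with dense effective domain, and absolutely $p$-homogeneous ($J(cu)=|c|^pJ(u)$ for all $c\neq0$, $u\in\mathcal H$, and $J(0)=0$), and assume $\lambda_1:=\inf_{u\in\mathcal H_0}\frac{pJ(u)}{\|u\|^p}>0$. Let $f\in\mathcal H_0$ and let $u$ solve the gradient flow $\partial_t u+\partial J(u)\ni 0$, $u(0)=f$. Then the extinction time satisfies $$T_{\mathrm{ex}}\le \frac{\|f\|^{2-p}}{(2-p)\lambda_1}<\infty.$$
   Context: $\langle\cdot,\cdot\rangle$ and $\|\cdot\|$ denote the inner product and norm of $\mathcal H$. The subdifferential is $\partial J(u)=\{\zeta\in\mathcal H: J(u)+\langle\zeta,v-u\rangle\le J(v)\ \forall v\in\mathcal H\}$. $\mathcal N(J)=\{u:J(u)=0\}$ and $\mathcal H_0:=\mathcal N(J)^\perp\setminus\{0\}$. The gradient flow is understood in Brezis' sense: the unique continuous $u:[0,\infty)\to\mathcal H$, Lipschitz on $[\delta,\infty)$ for every $\delta>0$, right-differentiable on $(0,\infty)$, with $u(0)=f$ and $\partial_t^+u(t)=-\zeta(t)$, where $\zeta(t)$ is the minimal-norm element of $\partial J(u(t))$. The extinction time is $T_{\mathrm{ex}}:=\inf\{T>0: u(t)=0\ \forall t\ge T\}\in(0,\infty]$. *)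

theory Defs
  imports "HOL-Analysis.Analysis"
begin

text \<open>Functionals J : H -> R \<union> {\<infinity>} are modelled as maps into ereal never taking -\<infinity>.\<close>

definition proper_fun :: "('a \<Rightarrow> ereal) \<Rightarrow> bool" where
  "proper_fun J \<longleftrightarrow> (\<forall>u. J u \<noteq> -\<infinity>) \<and> (\<exists>u. J u \<noteq> \<infinity>)"

definition convex_fun :: "('a::real_vector \<Rightarrow> ereal) \<Rightarrow> bool" where
  "convex_fun J \<longleftrightarrow>
     (\<forall>x y t. 0 \<le> t \<and> t \<le> 1 \<longrightarrow>
        J ((1 - t) *\<^sub>R x + t *\<^sub>R y) \<le> ereal (1 - t) * J x + ereal t * J y)"

definition lsc_fun :: "('a::topological_space \<Rightarrow> ereal) \<Rightarrow> bool" where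
  "lsc_fun J \<longleftrightarrow> (\<forall>x. J x \<le> Liminf (at x) J)"

definition effective_domain :: "('a \<Rightarrow> ereal) \<Rightarrow> 'a set" where
  "effective_domain J = {u. J u \<noteq> \<infinity>}"

definition abs_p_homogeneous :: "real \<Rightarrow> ('a::real_vector \<Rightarrow> ereal) \<Rightarrow> bool" where
  "abs_p_homogeneous p J \<longleftrightarrow>
     (\<forall>c u. c \<noteq> 0 \<longrightarrow> J (c *\<^sub>R u) = ereal (\<bar>c\<bar> powr p) * J u) \<and> J 0 = 0"

definition subdiff :: "('a::real_inner \<Rightarrow> ereal) \<Rightarrow> 'a \<Rightarrow> 'a set" where
  "subdiff J u = {\<zeta>. \<forall>v. J u + ereal (inner \<zeta> (v - u)) \<le> J v}"

definition null_set :: "('a \<Rightarrow> ereal) \<Rightarrow> 'a set" where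
  "null_set J = {u. J u = 0}"

definition H0 :: "('a::real_inner \<Rightarrow> ereal) \<Rightarrow> 'a set" where
  "H0 J = orthogonal_comp (null_set J) - {0}"

definition lambda1 :: "real \<Rightarrow> ('a::real_inner \<Rightarrow> ereal) \<Rightarrow> ereal" where
  "lambda1 p J = (INF u \<in> H0 J. ereal p * J u / ereal (norm u powr p))"

definition min_norm_subgrad :: "('a::real_inner \<Rightarrow> ereal) \<Rightarrow> 'a \<Rightarrow> 'a \<Rightarrow> bool" where
  "min_norm_subgrad J u \<zeta> \<longleftrightarrow> \<zeta> \<in> subdiff J u \<and> (\<forall>\<eta> \<in> subdiff J u. norm \<zeta> \<le> norm \<eta>)"

text \<open>Gradient flow in Brezis' sense (u on [0,\<infinity>), values outside irrelevant).\<close>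
definition brezis_flow :: "('a::real_inner \<Rightarrow> ereal) \<Rightarrow> 'a \<Rightarrow> (real \<Rightarrow> 'a) \<Rightarrow> bool" where
  "brezis_flow J f u \<longleftrightarrow>
     continuous_on {0..} u \<and>
     (\<forall>\<delta>>0. \<exists>L. L-lipschitz_on {\<delta>..} u) \<and>
     u 0 = f \<and>
     (\<forall>t>0. \<exists>\<zeta>. min_norm_subgrad J (u t) \<zeta> \<and>
                 (u has_vector_derivative - \<zeta>) (at t within {t..}))"

definition extinction_time :: "(real \<Rightarrow> 'a::zero) \<Rightarrow> ereal" where
  "extinction_time u = Inf {ereal T | T. T > 0 \<and> (\<forall>t\<ge>T. u t = 0)}"

end

theory Submission
  imports Defs
begin

lemma right_deriv_nonpos_decr:
  fixes g :: "real \<Rightarrow> real"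
  assumes ab: "a \<le> b" and cont: "continuous_on {a..b} g"
    and der: "\<And>t. a < t \<Longrightarrow> t < b \<Longrightarrow> \<exists>D. (g has_real_derivative D) (at t within {t..}) \<and> D \<le> 0"
  shows "g b \<le> g a"
proof -
  have key: "g b \<le> g a + e * (b - a) + e" if e: "e > 0" for e
  proof -
    define F where "F y = g y - g a - e * (y - a) - e" for y
    define S where "S = {x \<in> {a..b}. \<forall>y\<in>{a..x}. F y \<le> 0}"
    have aS: "a \<in> S" using ab e by (auto simp: S_def F_def)
    have Sb: "S \<subseteq> {a..b}" by (auto simp: S_def)
    have bdd: "bdd_above S" using Sb by (intro bdd_aboveI[of _ b]) auto
    define c where "c = Sup S"
    have ac: "a \<le> c" using aS bdd c_def by (simp add: cSup_upper)
    have cb: "c \<le> b" using aS Sb by (auto simp: c_def intro!: cSup_least)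
    have contF: "continuous_on {a..b} F" unfolding F_def by (intro continuous_intros cont)
    have clo: "closed {x \<in> {a..b}. F x \<le> 0}"
      using continuous_on_closed_Collect_le[OF contF continuous_on_const, of 0] by simp
    have "c \<in> closure S" using closure_contains_Sup[OF _ bdd] aS c_def by auto
    moreover have "closure S \<subseteq> {x \<in> {a..b}. F x \<le> 0}" using clo
      by (intro closure_minimal) (auto simp: S_def)
    ultimately have Fc: "F c \<le> 0" by auto
    have cS: "c \<in> S"
    proof -
      have "F y \<le> 0" if "a \<le> y" "y \<le> c" for y
      proof (cases "y = c")
        case True with Fc show ?thesis by simp
      next
        case False
        then have "y < Sup S" using that c_def by simp
        then obtain x where "x \<in> S" "y < x" using less_cSup_iff[of S y] aS bdd by auto
        then show ?thesis using that by (auto simp: S_def)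
      qed
      thus ?thesis using ac cb by (auto simp: S_def)
    qed
    have "c = b"
    proof (rule ccontr)
      assume "c \<noteq> b" hence cb': "c < b" using cb by simp
      have "\<exists>d>0. \<forall>y. c \<le> y \<and> y < c + d \<longrightarrow> F y \<le> 0"
      proof (cases "c = a")
        case True
        have "(F \<longlongrightarrow> F a) (at a within {a..b})"
          using contF ab unfolding continuous_on_def by auto
        moreover have "F a < 0" using e by (simp add: F_def)
        ultimately have "eventually (\<lambda>y. F y < 0) (at a within {a..b})"
          by (rule order_tendstoD(2))
        then obtain d where d: "d > 0" "\<forall>y\<in>{a..b}. y \<noteq> a \<and> dist y a < d \<longrightarrow> F y < 0"
          unfolding eventually_at by auto
        show ?thesis
        proof (intro exI[of _ "min d (b - a)"] conjI allI impI)
          show "0 < min d (b - a)" using d True cb' by auto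
        next
          fix y assume y: "c \<le> y \<and> y < c + min d (b - a)"
          show "F y \<le> 0"
          proof (cases "y = a")
            case True thus ?thesis using e by (simp add: F_def)
          next
            case False
            have "y \<in> {a..b}" "dist y a < d" using y \<open>c = a\<close> by (auto simp: dist_real_def)
            thus ?thesis using d(2) False by auto
          qed
        qed
      next
        case False
        hence "a < c" using ac by simp
        then obtain D where D: "(g has_real_derivative D) (at c within {c..})" "D \<le> 0"
          using der cb' by blast
        have "((\<lambda>y. (g y - g c) / (y - c)) \<longlongrightarrow> D) (at c within {c..})"
          using D(1) by (simp add: has_field_derivative_iff)
        moreover have "D < e" using D e by simp
        ultimately have "eventually (\<lambda>y. (g y - g c) / (y - c) < e) (at c within {c..})"
          by (rule order_tendstoD(2))
        then obtain d where d: "d > 0" "\<forall>y\<in>{c..}. y \<noteq> c \<and> dist y c < d \<longrightarrow> (g y - g c) / (y - c) < e"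
          unfolding eventually_at by auto
        show ?thesis
        proof (intro exI[of _ d] conjI allI impI)
          show "0 < d" by fact
        next
          fix y assume y: "c \<le> y \<and> y < c + d"
          show "F y \<le> 0"
          proof (cases "y = c")
            case True thus ?thesis using Fc by simp
          next
            case False
            hence yc: "c < y" using y by simp
            hence "(g y - g c) / (y - c) < e" using d(2)[rule_format, of y] y by (auto simp: dist_real_def)
            hence "g y - g c < e * (y - c)" using yc by (simp add: divide_less_eq)
            thus ?thesis using Fc by (simp add: F_def algebra_simps)
          qed
        qed
      qed
      then obtain d where d: "d > 0" "\<forall>y. c \<le> y \<and> y < c + d \<longrightarrow> F y \<le> 0" by auto
      define x where "x = c + min d (b - c) / 2"
      have xc: "c < x" using d cb' by (simp add: x_def)
      have "x \<in> S"
      proof -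
        have "x \<in> {a..b}" using ac cb' d by (auto simp: x_def min_def field_simps)
        moreover have "F y \<le> 0" if "a \<le> y" "y \<le> x" for y
        proof (cases "y \<le> c")
          case True thus ?thesis using cS that by (auto simp: S_def)
        next
          case False
          have "y < c + d" using that d(1) unfolding x_def by (auto simp: min_def field_simps split: if_splits)
          thus ?thesis using d False by auto
        qed
        ultimately show ?thesis by (auto simp: S_def)
      qed
      hence "x \<le> c" unfolding c_def using bdd by (rule cSup_upper)
      thus False using xc by simp
    qed
    hence "F b \<le> 0" using cS ab by (auto simp: S_def)
    thus ?thesis by (simp add: F_def)
  qed
  show ?thesis
  proof (rule ccontr)
    assume "\<not> g b \<le> g a"
    hence pos: "g b - g a > 0" by simp
    define e where "e = (g b - g a) / (2 * (b - a + 1))"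
    have e0: "e > 0" using pos ab by (simp add: e_def)
    have "e * (b - a + 1) = (g b - g a) / 2" unfolding e_def using ab by (simp add: field_simps)
    hence "e * (b - a) + e = (g b - g a) / 2" by (simp add: algebra_simps)
    hence "g b \<le> g a + (g b - g a) / 2" using key[OF e0] by linarith
    thus False using pos by (simp add: field_simps)
  qed
qed



lemma J_neg:
  assumes "abs_p_homogeneous p J"
  shows "J (- u) = J u"
proof -
  have "J ((-1) *\<^sub>R u) = ereal (\<bar>-1\<bar> powr p) * J u"
    using assms unfolding abs_p_homogeneous_def by (metis neg_one_neq_zero)
  thus ?thesis by simp
qed

lemma J_nonneg:
  assumes "convex_fun J" "abs_p_homogeneous p J"
  shows "0 \<le> J u"
proof -
  have "J ((1 - 1/2) *\<^sub>R u + (1/2) *\<^sub>R (- u)) \<le> ereal (1 - 1/2) * J u + ereal (1/2) * J (- u)"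
    using assms(1) unfolding convex_fun_def by (metis field_sum_of_halves le_add_same_cancel1 less_eq_real_def zero_less_divide_1_iff zero_less_numeral)
  moreover have "J 0 = 0" using assms(2) by (simp add: abs_p_homogeneous_def)
  ultimately have "0 \<le> ereal (1/2) * J u + ereal (1/2) * J u"
    using J_neg[OF assms(2)] by (simp add: algebra_simps)
  thus ?thesis by (cases "J u") auto
qed

lemma subdiff_finite:
  assumes "proper_fun J" "\<zeta> \<in> subdiff J u"
  shows "\<exists>j. J u = ereal j"
proof -
  obtain v where v: "J v \<noteq> \<infinity>" using assms(1) by (auto simp: proper_fun_def)
  have "J u + ereal (inner \<zeta> (v - u)) \<le> J v" using assms(2) by (auto simp: subdiff_def)
  moreover have "J u \<noteq> -\<infinity>" using assms(1) by (auto simp: proper_fun_def)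
  ultimately show ?thesis using v by (cases "J u") auto
qed

lemma euler_ineq:
  assumes hom: "abs_p_homogeneous p J" and sd: "\<zeta> \<in> subdiff J u" and ju: "J u = ereal j"
  shows "p * j \<le> inner \<zeta> u"
proof -
  have ev: "eventually (\<lambda>c. (c powr p - 1) / (c - 1) * j \<le> inner \<zeta> u) (at_left 1)"
    using eventually_at_left_real[of 0 "1::real", OF zero_less_one]
  proof (rule eventually_mono)
    fix c :: real assume c: "c \<in> {0<..<1}"
    have "J u + ereal (inner \<zeta> (c *\<^sub>R u - u)) \<le> J (c *\<^sub>R u)" using sd by (auto simp: subdiff_def)
    moreover have "J (c *\<^sub>R u) = ereal (c powr p) * J u"
      using hom c unfolding abs_p_homogeneous_def by auto
    ultimately have "j + (c - 1) * inner \<zeta> u \<le> c powr p * j"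
      using ju by (simp add: inner_diff_right algebra_simps)
    hence "(1 - c powr p) * j \<le> (1 - c) * inner \<zeta> u" by (simp add: algebra_simps)
    hence "(1 - c powr p) * j / (1 - c) \<le> inner \<zeta> u" using c by (simp add: divide_le_eq mult.commute)
    moreover have "(c powr p - 1) / (c - 1) = (1 - c powr p) / (1 - c)"
      by (metis minus_diff_eq minus_divide_divide)
    ultimately show "(c powr p - 1) / (c - 1) * j \<le> inner \<zeta> u" by simp
  qed
  have "((\<lambda>c. c powr p) has_real_derivative p * 1 powr (p - 1)) (at 1)"
    by (rule has_real_derivative_powr) simp
  hence "((\<lambda>c. (c powr p - 1 powr p) / (c - 1)) \<longlongrightarrow> p) (at 1)"
    by (simp add: has_field_derivative_iff)
  hence "((\<lambda>c. (c powr p - 1) / (c - 1)) \<longlongrightarrow> p) (at_left 1)"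
    by (simp add: filterlim_at_split)
  hence "((\<lambda>c. (c powr p - 1) / (c - 1) * j) \<longlongrightarrow> p * j) (at_left 1)"
    by (intro tendsto_intros)
  thus ?thesis using ev by (rule tendsto_upperbound) simp
qed

lemma subgrad_orth:
  assumes cvx: "convex_fun J" and hom: "abs_p_homogeneous p J"
    and sd: "\<zeta> \<in> subdiff J u" and ju: "J u = ereal j" and jn: "J n = 0"
  shows "inner \<zeta> n = 0"
proof -
  have s_le: "s * inner \<zeta> n \<le> 0" if s: "s = 1 \<or> s = -1" for s :: real
  proof -
    have ev: "eventually (\<lambda>t. s * inner \<zeta> n \<le> (1 - t) * (1 / (1 - t)) powr p * j - j) (at_right 0)"
      using eventually_at_right_real[of 0 "1::real", OF zero_less_one]
    proof (rule eventually_mono)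
      fix t :: real assume t: "t \<in> {0<..<1}"
      have eq: "u + s *\<^sub>R n = (1 - t) *\<^sub>R ((1 / (1 - t)) *\<^sub>R u) + t *\<^sub>R ((s / t) *\<^sub>R n)"
        using t by (simp add: scaleR_scaleR)
      have C: "J ((1 - t) *\<^sub>R ((1 / (1 - t)) *\<^sub>R u) + t *\<^sub>R ((s / t) *\<^sub>R n)) \<le> ereal (1 - t) * J ((1 / (1 - t)) *\<^sub>R u) + ereal t * J ((s / t) *\<^sub>R n)"
        by (rule cvx[unfolded convex_fun_def, rule_format]) (use t in auto)
      have "J (u + s *\<^sub>R n) \<le> ereal (1 - t) * J ((1 / (1 - t)) *\<^sub>R u) + ereal t * J ((s / t) *\<^sub>R n)"
        by (subst eq) (rule C)
      moreover have "J ((1 / (1 - t)) *\<^sub>R u) = ereal ((1 / (1 - t)) powr p) * J u"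
        using hom t unfolding abs_p_homogeneous_def by auto
      moreover have "J ((s / t) *\<^sub>R n) = ereal (\<bar>s / t\<bar> powr p) * J n"
      proof -
        have "s / t \<noteq> 0" using s t by auto
        thus ?thesis using hom unfolding abs_p_homogeneous_def by blast
      qed
      ultimately have A: "J (u + s *\<^sub>R n) \<le> ereal ((1 - t) * (1 / (1 - t)) powr p * j)"
        using ju jn by (simp add: mult.assoc)
      have B0: "J u + ereal (inner \<zeta> ((u + s *\<^sub>R n) - u)) \<le> J (u + s *\<^sub>R n)"
        using sd unfolding subdiff_def by blast
      with A have "j + s * inner \<zeta> n \<le> (1 - t) * (1 / (1 - t)) powr p * j"
      proof -
        have "ereal (j + s * inner \<zeta> n) \<le> ereal ((1 - t) * (1 / (1 - t)) powr p * j)"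
        proof -
          have "ereal (j + s * inner \<zeta> n) = J u + ereal (inner \<zeta> ((u + s *\<^sub>R n) - u))"
            using ju by simp
          thus ?thesis using order_trans[OF B0 A] by simp
        qed
        thus ?thesis by (simp only: ereal_less_eq)
      qed
      thus "s * inner \<zeta> n \<le> (1 - t) * (1 / (1 - t)) powr p * j - j" by simp
    qed
    have "((\<lambda>t. (1 - t) * (1 / (1 - t)) powr p * j - j) \<longlongrightarrow> (1 - 0) * (1 / (1 - 0)) powr p * j - j) (at_right (0::real))"
      by (intro tendsto_intros) auto
    hence "((\<lambda>t. (1 - t) * (1 / (1 - t)) powr p * j - j) \<longlongrightarrow> 0) (at_right (0::real))" by simp
    thus ?thesis using ev by (rule tendsto_lowerbound) simp
  qed
  show ?thesis using s_le[of 1] s_le[of "-1"] by simp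
qed



lemma deriv_inner_const:
  assumes "(u has_vector_derivative v) F"
  shows "((\<lambda>s. inner (u s) n) has_real_derivative inner v n) F"
proof -
  have "((\<lambda>s. inner (u s) n) has_derivative (\<lambda>x. inner (x *\<^sub>R v) n)) F"
    by (rule has_derivative_inner_left) (use assms in \<open>simp add: has_vector_derivative_def\<close>)
  moreover have "(\<lambda>x. inner (x *\<^sub>R v) n) = (*) (inner v n)" by (auto simp: fun_eq_iff)
  ultimately show ?thesis by (simp add: has_field_derivative_def)
qed

lemma deriv_normsq:
  assumes "(u has_vector_derivative v) (at t within S)"
  shows "((\<lambda>s. inner (u s) (u s)) has_real_derivative 2 * inner (u t) v) (at t within S)"
proof -
  have d: "(u has_derivative (\<lambda>h. h *\<^sub>R v)) (at t within S)"
    using assms by (simp add: has_vector_derivative_def)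
  have "((\<lambda>s. inner (u s) (u s)) has_derivative (\<lambda>h. u t \<bullet> (h *\<^sub>R v) + (h *\<^sub>R v) \<bullet> u t)) (at t within S)"
    by (rule has_derivative_inner[OF d d])
  moreover have "(\<lambda>h. u t \<bullet> (h *\<^sub>R v) + (h *\<^sub>R v) \<bullet> u t) = (*) (2 * inner (u t) v)"
    by (auto simp: fun_eq_iff inner_commute algebra_simps)
  ultimately show ?thesis by (simp add: has_field_derivative_def)
qed

lemma normsq_powr:
  fixes x :: "'a::real_inner"
  shows "(inner x x) powr a = norm x powr (2 * a)"
proof (cases "x = 0")
  case True thus ?thesis by simp
next
  case False
  hence "norm x > 0" by simp
  have "inner x x = norm x powr 2" using \<open>norm x > 0\<close>
    by (simp add: power2_norm_eq_inner[symmetric] powr_realpow[of _ 2, simplified])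
  thus ?thesis by (metis powr_powr)
qed



theorem theorem2:
  fixes J :: "'a::{real_inner, complete_space} \<Rightarrow> ereal"
    and p :: real and f :: 'a and u :: "real \<Rightarrow> 'a"
  assumes "1 \<le> p" "p < 2"
    and "convex_fun J" "lsc_fun J" "proper_fun J"
    and "closure (effective_domain J) = UNIV"
    and "abs_p_homogeneous p J"
    and "lambda1 p J > 0"
    and "f \<in> H0 J"
    and "brezis_flow J f u"
  shows "extinction_time u \<le> ereal (norm f powr (2 - p)) / (ereal (2 - p) * lambda1 p J)
         \<and> extinction_time u < \<infinity>"
proof -
  note p1 = assms(1) and p2 = assms(2) and cvx = assms(3) and prp = assms(5)
    and hom = assms(7) and lpos = assms(8) and fH = assms(9)
  have cont: "continuous_on {0..} u" and u0: "u 0 = f"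
    and flow: "\<forall>t>0. \<exists>\<zeta>. min_norm_subgrad J (u t) \<zeta> \<and> (u has_vector_derivative - \<zeta>) (at t within {t..})"
    using assms(10) unfolding brezis_flow_def by auto
  obtain Z where Z: "\<And>t. t > 0 \<Longrightarrow> Z t \<in> subdiff J (u t) \<and> (u has_vector_derivative - Z t) (at t within {t..})"
    using flow unfolding min_norm_subgrad_def by metis
  have fin: "\<exists>j. J (u t) = ereal j \<and> 0 \<le> j \<and> p * j \<le> inner (Z t) (u t)" if t: "t > 0" for t
  proof -
    obtain j where j: "J (u t) = ereal j" using subdiff_finite[OF prp] Z[OF t] by blast
    have "0 \<le> j" using J_nonneg[OF cvx hom, of "u t"] j by simp
    moreover have "p * j \<le> inner (Z t) (u t)" using euler_ineq[OF hom _ j] Z[OF t] by blast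
    ultimately show ?thesis using j by blast
  qed
  have ipnn: "0 \<le> inner (Z t) (u t)" if "t > 0" for t
    using fin[OF that] p1 by (smt (verit, best) mult_nonneg_nonneg)
  have f0: "f \<noteq> 0" and forth: "f \<in> orthogonal_comp (null_set J)" using fH by (auto simp: H0_def)
  have contI: "continuous_on {a..b} u" if "0 \<le> a" for a b
    by (rule continuous_on_subset[OF cont]) (use that in auto)
  have orth: "u t \<in> orthogonal_comp (null_set J)" if t: "t \<ge> 0" for t
  proof -
    have "orthogonal n (u t)" if n: "n \<in> null_set J" for n
    proof -
      have Jn: "J n = 0" using n by (simp add: null_set_def)
      have g0: "inner (u 0) n = 0" using forth n u0
        by (auto simp: orthogonal_comp_def orthogonal_def inner_commute)
      have dz: "((\<lambda>s. inner (u s) n) has_real_derivative 0) (at s within {s..})" if sp: "s > 0" for s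
      proof -
        obtain j where j: "J (u s) = ereal j" using fin[OF sp] by blast
        have "inner (Z s) n = 0" using subgrad_orth[OF cvx hom _ j Jn] Z[OF sp] by blast
        moreover have "((\<lambda>s. inner (u s) n) has_real_derivative inner (- Z s) n) (at s within {s..})"
          using Z[OF sp] by (intro deriv_inner_const) auto
        ultimately show ?thesis by simp
      qed
      have c1: "continuous_on {0..t} (\<lambda>s. inner (u s) n)"
        by (intro continuous_intros contI) simp
      have "inner (u t) n \<le> inner (u 0) n"
        by (rule right_deriv_nonpos_decr[OF t c1]) (use dz in auto)
      moreover have "- inner (u t) n \<le> - inner (u 0) n"
      proof (rule right_deriv_nonpos_decr[OF t, where g = "\<lambda>s. - inner (u s) n"])
        show "continuous_on {0..t} (\<lambda>s. - inner (u s) n)" by (intro continuous_intros contI) simp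
      next
        fix s assume "0 < s" "s < t"
        thus "\<exists>D. ((\<lambda>s. - inner (u s) n) has_real_derivative D) (at s within {s..}) \<and> D \<le> 0"
          using DERIV_minus[OF dz[of s]] by auto
      qed
      ultimately show ?thesis using g0 by (simp add: orthogonal_def inner_commute)
    qed
    thus ?thesis by (simp add: orthogonal_comp_def)
  qed
  have nmono: "norm (u t) \<le> norm (u s)" if st: "0 \<le> s" "s \<le> t" for s t
  proof -
    have c1: "continuous_on {s..t} (\<lambda>x. inner (u x) (u x))"
      by (intro continuous_intros contI st)
    have "inner (u t) (u t) \<le> inner (u s) (u s)"
    proof (rule right_deriv_nonpos_decr[OF st(2) c1])
      fix x assume x: "s < x" "x < t"
      hence xp: "x > 0" using st by simp
      have "((\<lambda>s. inner (u s) (u s)) has_real_derivative 2 * inner (u x) (- Z x)) (at x within {x..})"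
        using Z[OF xp] by (intro deriv_normsq) auto
      moreover have "2 * inner (u x) (- Z x) \<le> 0" using ipnn[OF xp] by (simp add: inner_commute)
      ultimately show "\<exists>D. ((\<lambda>x. inner (u x) (u x)) has_real_derivative D) (at x within {x..}) \<and> D \<le> 0"
        by blast
    qed
    hence "(norm (u t))^2 \<le> (norm (u s))^2" by (simp add: power2_norm_eq_inner)
    thus ?thesis by (rule power2_le_imp_le) simp
  qed
  have lbound: "lambda1 p J \<le> ereal (p * j / norm (u t) powr p)"
    if t: "t > 0" and ne: "u t \<noteq> 0" and j: "J (u t) = ereal j" for t j
  proof -
    have "u t \<in> H0 J" using orth[of t] t ne by (simp add: H0_def)
    hence "lambda1 p J \<le> ereal p * J (u t) / ereal (norm (u t) powr p)"
      unfolding lambda1_def by (rule INF_lower)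
    thus ?thesis using j ne by simp
  qed
  show ?thesis
  proof (cases "\<exists>t>0. u t \<noteq> 0")
    case False
    have "extinction_time u \<le> 0"
    proof (rule dense_ge)
      fix y :: ereal assume y: "0 < y"
      obtain e where e: "0 < e" "ereal e \<le> y"
        using y by (cases y) (auto intro: zero_less_one)
      have "extinction_time u \<le> ereal e"
        unfolding extinction_time_def using e False by (intro Inf_lower) auto
      thus "extinction_time u \<le> y" using e by simp
    qed
    moreover have "0 \<le> ereal (norm f powr (2 - p)) / (ereal (2 - p) * lambda1 p J)"
      using lpos p2 by (intro zero_le_divide_ereal) auto
    ultimately show ?thesis by auto
  next
    case True
    then obtain t0 where t0: "t0 > 0" "u t0 \<noteq> 0" by blast
    obtain j0 where j0: "J (u t0) = ereal j0" using fin[OF t0(1)] by blast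
    have "lambda1 p J \<noteq> \<infinity>" using lbound[OF t0 j0] by auto
    then obtain L where L: "lambda1 p J = ereal L" "L > 0" using lpos by (cases "lambda1 p J") auto
    define T where "T = norm f powr (2 - p) / ((2 - p) * L)"
    have Tpos: "T > 0" using f0 L p2 by (simp add: T_def)
    have TL: "(2 - p) * L * T = norm f powr (2 - p)" using L p2 by (simp add: T_def)
    have zero: "u t1 = 0" if t1: "t1 \<ge> T" for t1
    proof (rule ccontr)
      assume ne: "u t1 \<noteq> 0"
      have t1p: "t1 > 0" using t1 Tpos by simp
      have nz: "u s \<noteq> 0" if "0 \<le> s" "s \<le> t1" for s
        using nmono[OF that] ne by auto
      define G where "G s = (inner (u s) (u s)) powr ((2 - p) / 2) + (2 - p) * L * s" for s
      have cG: "continuous_on {0..t1} G"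
        unfolding G_def using nz
        by (intro continuous_intros contI) auto
      have "G t1 \<le> G 0"
      proof (rule right_deriv_nonpos_decr[OF less_imp_le[OF t1p] cG])
        fix s assume s: "0 < s" "s < t1"
        obtain j where j: "J (u s) = ereal j" "0 \<le> j" "p * j \<le> inner (Z s) (u s)"
          using fin[OF s(1)] by blast
        have uns: "u s \<noteq> 0" using nz s by simp
        define n where "n = norm (u s)"
        have n0: "n > 0" using uns by (simp add: n_def)
        define q where "q = inner (u s) (u s)"
        have q0: "q > 0" using uns by (simp add: q_def)
        have dq: "((\<lambda>s. inner (u s) (u s)) has_real_derivative 2 * inner (u s) (- Z s)) (at s within {s..})"
          using Z[OF s(1)] by (intro deriv_normsq) auto
        have dpow: "((\<lambda>y. y powr ((2 - p) / 2)) has_real_derivative ((2 - p) / 2) * q powr ((2 - p) / 2 - 1)) (at q)"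
          using q0 by (rule has_real_derivative_powr)
        have dG: "(G has_real_derivative ((2 - p) / 2) * q powr ((2 - p) / 2 - 1) * (2 * inner (u s) (- Z s)) + (2 - p) * L) (at s within {s..})"
        proof -
          have dc: "((\<lambda>x. (inner (u x) (u x)) powr ((2 - p) / 2)) has_real_derivative
              ((2 - p) / 2) * q powr ((2 - p) / 2 - 1) * (2 * inner (u s) (- Z s))) (at s within {s..})"
            using DERIV_chain2[where f = "\<lambda>y. y powr ((2 - p) / 2)" and g = "\<lambda>x. inner (u x) (u x)",
                OF dpow[unfolded q_def] dq] unfolding q_def by simp
          have dl: "((\<lambda>s. (2 - p) * L * s) has_real_derivative (2 - p) * L) (at s within {s..})"
            by (auto intro!: derivative_eq_intros)
          show ?thesis unfolding G_def by (rule DERIV_add[OF dc dl])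
        qed
        have qp: "q powr ((2 - p) / 2 - 1) = n powr (- p)"
          unfolding q_def n_def normsq_powr by (simp add: field_simps)
        have lb: "L \<le> p * j / n powr p" using lbound[OF s(1) uns j(1)] L by (simp add: n_def)
        hence "L * n powr p \<le> p * j" using n0 by (simp add: field_simps)
        hence A: "L * n powr p \<le> inner (Z s) (u s)" using j(3) by simp
        have "n powr (- p) * (L * n powr p) \<le> n powr (- p) * inner (Z s) (u s)"
          using A by (intro mult_left_mono) auto
        moreover have "n powr (- p) * (L * n powr p) = L"
          using n0 by (simp add: powr_minus field_simps)
        ultimately have B: "L \<le> n powr (- p) * inner (Z s) (u s)" by simp
        have "((2 - p) / 2) * q powr ((2 - p) / 2 - 1) * (2 * inner (u s) (- Z s)) + (2 - p) * L
              = (2 - p) * (L - n powr (- p) * inner (Z s) (u s))"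
          unfolding qp by (simp add: inner_commute field_simps)
        also have "\<dots> \<le> 0" using B p2 by (intro mult_nonneg_nonpos) auto
        finally show "\<exists>D. (G has_real_derivative D) (at s within {s..}) \<and> D \<le> 0"
          using dG by blast
      qed
      have e2: "2 * ((2 - p) / 2) = 2 - p" by simp
      have "G t1 \<le> G 0" by fact
      moreover have "G 0 = norm f powr (2 - p)" unfolding G_def normsq_powr u0 e2 by simp
      moreover have "G t1 = norm (u t1) powr (2 - p) + (2 - p) * L * t1"
        unfolding G_def normsq_powr e2 by simp
      moreover have "norm (u t1) powr (2 - p) > 0" using ne by simp
      moreover have "(2 - p) * L * T \<le> (2 - p) * L * t1"
        using t1 L p2 by (intro mult_left_mono) auto
      ultimately show False using TL by linarith
    qed
    have "extinction_time u \<le> ereal T"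
      unfolding extinction_time_def using Tpos zero by (intro Inf_lower) auto
    moreover have "ereal (norm f powr (2 - p)) / (ereal (2 - p) * lambda1 p J) = ereal T"
      using L p2 by (simp add: T_def)
    ultimately show ?thesis by auto
  qed
qed


end
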